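(* Let $c\in(0,1)$ and let $(M_n)_{n\ge1}$ be integers with $1\le M_n\le kn-1$ and $M_n/(kn)\to c$. Then for $k=2$, \[ \lim_{n\to\infty}P_{n,2}(\mathcal{S}(n,2;M_n))=-2c(1-c)+(2c-c^2)\log(2-c)-(2c+c^2)\log c, \] and for $k=3$, \[ \lim_{n\to\infty}P_{n,3}(\mathcal{S}(n,3;M_n))=-\tfrac32(1-c)c(1+3c)-(3c+3c^2+c^3)\log c+\big(\tfrac32c+\tfrac32c^2-c^3\big)\log(c^2-3c+3)+3\sqrt3(c^2-c)\arctan\Big(\frac{3-2c}{\sqrt3}\Big)+\frac{\sqrt3\,\pi}2(c-c^2). \]
   Context: Fix integers $k\ge2$, $n\ge1$. There are $kn$ items, $k$ items at each of the ranks $1,2,\dots,n$ (rank $n$ is highest). The items are revealed one at a time in a uniformly random order, i.e. the sequence of ranks is a uniformly random permutation of the multiset $\{1^k,2^k,\dots,n^k\}$; $P_{n,k}$ denotes this uniform probability. For $M\in\{1,\dots,kn-1\}$, the strategy $\mathcal{S}(n,k;M)$ lets the first $M$ items pass and then selects the first later-arriving item whose rank is greater than or equal to the highest rank among the first $M$ items (if such an item exists; otherwise nothing is selected). $P_{n,k}(\mathcal{S}(n,k;M))$ denotes the probability that this strategy selects an item of rank $n$. *)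

theory Defs
  imports Complex_Main
begin

text \<open>An arrangement of the multiset {1^k,...,n^k}: a sequence s of length k*n
  (positions 0..k*n-1; s i = 0 outside) taking each rank 1..n exactly k times.\<close>
definition arrangements :: "nat \<Rightarrow> nat \<Rightarrow> (nat \<Rightarrow> nat) set" where
  "arrangements n k = {s. (\<forall>i. k*n \<le> i \<longrightarrow> s i = 0)
      \<and> (\<forall>i<k*n. s i \<in> {1..n})
      \<and> (\<forall>r\<in>{1..n}. card {i. i < k*n \<and> s i = r} = k)}"

definition strategy_wins :: "nat \<Rightarrow> nat \<Rightarrow> nat \<Rightarrow> (nat \<Rightarrow> nat) \<Rightarrow> bool" where
  "strategy_wins n k M s = (let t = Max (s ` {..<M}) in
     \<exists>j. M \<le> j \<and> j < k*n \<and> t \<le> s j \<and> (\<forall>i. M \<le> i \<and> i < j \<longrightarrow> s i < t) \<and> s j = n)"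

definition win_prob :: "nat \<Rightarrow> nat \<Rightarrow> nat \<Rightarrow> real" where
  "win_prob n k M = real (card {s \<in> arrangements n k. strategy_wins n k M s})
                    / real (card (arrangements n k))"

end

theory Submission
  imports Defs "HOL-Combinatorics.Multiset_Permutations" "HOL-Computational_Algebra.Formal_Power_Series"
    "HOL-Analysis.Uniform_Limit"
begin

no_notation vector_scalar_mult (infixl \<open>*s\<close> 70)

definition Pr :: "'a multiset \<Rightarrow> ('a list \<Rightarrow> bool) \<Rightarrow> real" where
 "Pr A Q = real (card {xs \<in> permutations_of_multiset A. Q xs}) / real (card (permutations_of_multiset A))"

lemma card_perms_pos: "card (permutations_of_multiset A) > 0"
  by (simp add: card_gt_0_iff)

lemma Pr_rec:
  assumes "A \<noteq> {#}"
  shows "Pr A Q = (\<Sum>x\<in>set_mset A. real (count A x) / real (size A) * Pr (A - {#x#}) (\<lambda>xs. Q (x#xs)))"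
proof -
  have eq: "{xs \<in> permutations_of_multiset A. Q xs} =
     (\<Union>x\<in>set_mset A. (#) x ` {ys \<in> permutations_of_multiset (A - {#x#}). Q (x#ys)})"
    using permutations_of_multiset_nonempty[OF assms] by auto
  have card: "card {xs \<in> permutations_of_multiset A. Q xs} =
     (\<Sum>x\<in>set_mset A. card {ys \<in> permutations_of_multiset (A - {#x#}). Q (x#ys)})"
    unfolding eq
    by (subst card_UN_disjoint) (auto simp: card_image inj_on_def)
  have sz: "size A > 0" using assms by (simp add: nonempty_has_size)
  show ?thesis
    unfolding Pr_def card of_nat_sum sum_divide_distrib
  proof (rule sum.cong[OF refl])
    fix x assume x: "x \<in># A"
    have "real (card (permutations_of_multiset (A - {#x#}))) =
       real (card (permutations_of_multiset A) * count A x) / real (size A)"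
      by (rule real_card_permutations_of_multiset_remove[OF x])
    then show "real (card {ys \<in> permutations_of_multiset (A - {#x#}). Q (x # ys)}) /
         real (card (permutations_of_multiset A)) =
         real (count A x) / real (size A) *
         (real (card {xs \<in> permutations_of_multiset (A - {#x#}). Q (x # xs)}) /
          real (card (permutations_of_multiset (A - {#x#}))))"
      using sz x card_perms_pos[of A] by (simp add: field_simps)
  qed
qed

lemma size_filter_sum:
  "real (size (filter_mset P A)) = (\<Sum>x\<in>set_mset A. if P x then real (count A x) else 0)"
proof -
  have "size (filter_mset P A) = (\<Sum>x\<in>set_mset (filter_mset P A). count (filter_mset P A) x)"
    by (rule size_multiset_overloaded_eq)
  also have "\<dots> = (\<Sum>x\<in>{x\<in>set_mset A. P x}. count A x)"
    by (rule sum.cong) auto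
  also have "\<dots> = (\<Sum>x\<in>set_mset A. if P x then count A x else 0)"
    by (simp add: sum.inter_filter)
  finally show ?thesis by (auto simp: of_nat_sum intro!: sum.cong)
qed

lemma size_sum_count: "real (size A) = (\<Sum>x\<in>set_mset A. real (count A x))"
  using size_filter_sum[of "\<lambda>_. True" A] by simp

lemma Pr_const: "Pr A (\<lambda>_. b) = (if b then 1 else 0)"
  using card_perms_pos[of A] by (simp add: Pr_def)

lemma Pr_find:
  fixes t n :: nat and A :: "nat multiset"
  assumes "t \<le> n"
  shows "Pr A (\<lambda>xs. find (\<lambda>x. t \<le> x) xs = Some n) =
    real (count A n) / real (size (filter_mset (\<lambda>x. t \<le> x) A))"
  using assms
proof (induction "size A" arbitrary: A)
  case 0
  then show ?case by (simp add: Pr_def)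
next
  case (Suc m)
  let ?G = "real (size (filter_mset (\<lambda>x. t \<le> x) A))"
  let ?g = "real (count A n) / ?G"
  have ne: "A \<noteq> {#}" using Suc.hyps(2) by auto
  have inner: "Pr (A - {#x#}) (\<lambda>xs. find (\<lambda>x. t \<le> x) (x#xs) = Some n) =
      (if t \<le> x then (if x = n then 1 else 0) else ?g)" if x: "x \<in># A" for x
  proof (cases "t \<le> x")
    case True then show ?thesis by (simp add: Pr_const)
  next
    case False
    have sA: "size (A - {#x#}) = m" using Suc.hyps(2) x by (simp add: size_Diff_submset)
    have "filter_mset (\<lambda>x. t \<le> x) (A - {#x#}) = filter_mset (\<lambda>x. t \<le> x) A"
      using False by (simp add: filter_diff_mset)
    moreover have "count (A - {#x#}) n = count A n" using False Suc.prems by auto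
    ultimately show ?thesis using Suc.hyps(1)[OF sA[symmetric] Suc.prems] False by simp
  qed
  have "Pr A (\<lambda>xs. find (\<lambda>x. t \<le> x) xs = Some n) =
     (\<Sum>x\<in>set_mset A. real (count A x) / real (size A) * (if t \<le> x then (if x = n then 1 else 0) else ?g))"
  proof (subst Pr_rec[OF ne], rule sum.cong[OF refl])
    fix x assume x: "x \<in> set_mset A"
    show "real (count A x) / real (size A) * Pr (A - {#x#}) (\<lambda>xs. find (\<lambda>x. t \<le> x) (x#xs) = Some n) =
      real (count A x) / real (size A) * (if t \<le> x then (if x = n then 1 else 0) else ?g)"
      by (simp only: inner[OF x])
  qed
  also have "\<dots> = (\<Sum>x\<in>set_mset A. (if x = n then real (count A x) else 0)
            + ?g * (if t \<le> x then 0 else real (count A x))) / real (size A)"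
    unfolding sum_divide_distrib
    by (rule sum.cong) (use Suc.prems in \<open>auto simp: field_simps\<close>)
  also have "(\<Sum>x\<in>set_mset A. (if x = n then real (count A x) else 0)
            + ?g * (if t \<le> x then 0 else real (count A x))) =
       real (count A n) + ?g * (real (size A) - ?G)"
  proof -
    have 1: "(\<Sum>x\<in>set_mset A. (if x = n then real (count A x) else 0)) = real (count A n)"
      by (cases "n \<in># A") (auto simp: sum.delta' not_in_iff)
    have 2: "(\<Sum>x\<in>set_mset A. (if t \<le> x then 0 else real (count A x))) = real (size A) - ?G"
      unfolding size_filter_sum unfolding size_sum_count sum_subtractf[symmetric] by (rule sum.cong) auto
    have "(\<Sum>x\<in>set_mset A. (if x = n then real (count A x) else 0)
            + ?g * (if t \<le> x then 0 else real (count A x))) = (\<Sum>x\<in>set_mset A. (if x = n then real (count A x) else 0))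
            + ?g * (\<Sum>x\<in>set_mset A. (if t \<le> x then 0 else real (count A x)))"
      by (simp only: sum.distrib sum_distrib_left)
    then show ?thesis by (simp only: 1 2)
  qed
  also have "(real (count A n) + ?g * (real (size A) - ?G)) / real (size A) = ?g"
  proof (cases "?G = 0")
    case True
    then have "filter_mset (\<lambda>x. t \<le> x) A = {#}" by simp
    then have "count A n = 0" using Suc.prems by (metis count_empty count_filter_mset)
    then show ?thesis by simp
  next
    case False
    have "size A > 0" using ne by (simp add: nonempty_has_size)
    then show ?thesis using False by (simp add: field_simps)
  qed
  finally show ?case .
qed

definition ff :: "real \<Rightarrow> nat \<Rightarrow> real" where
  "ff x m = (\<Prod>i<m. x - real i)"

lemma ff_0[simp]: "ff x 0 = 1" by (simp add: ff_def)

lemma ff_Suc2: "ff x (Suc m) = ff x m * (x - real m)"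
  by (simp add: ff_def)

lemma ff_Suc1: "ff x (Suc m) = x * ff (x - 1) m"
  unfolding ff_def prod.lessThan_Suc_shift by (simp add: algebra_simps)

lemma ff_nat_zero: "x < m \<Longrightarrow> ff (real x) m = 0"
  unfolding ff_def by (rule prod_zero) (auto intro!: bexI[of _ x])

lemma ff_nat_pos: "m \<le> x \<Longrightarrow> ff (real x) m > 0"
  unfolding ff_def by (rule prod_pos) auto

lemma ff_nat_nonneg: "ff (real x) m \<ge> 0"
  by (cases "x < m") (auto simp: ff_nat_zero less_imp_le ff_nat_pos not_less)

lemma ff_nat_zero_iff: "ff (real x) m = 0 \<longleftrightarrow> x < m"
  using ff_nat_zero ff_nat_pos by (metis less_numeral_extra(3) not_less)

lemma aux1: "(L::real) \<noteq> 0 \<Longrightarrow> L / N * (Y / (D * L)) = Y / (N * D)"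
  by (cases "N = 0"; cases "D = 0") (simp_all add: field_simps)

lemma aux2:
  fixes T Ch C a f1 f2 fS F N D :: real
  assumes "T * Ch = a * C" "fS = f1 + a * f2"
  shows "C * f1 * F / (N * D) + T / N * (Ch * f2 * F / D) = C * fS * F / (N * D)"
proof -
  have "T / N * (Ch * f2 * F / D) = (T * Ch) * f2 * F / (N * D)" by simp
  also have "\<dots> = C * (a * f2) * F / (N * D)" using assms(1) by simp
  finally show ?thesis unfolding assms(2) by (simp add: add_divide_distrib[symmetric] algebra_simps)
qed

lemma step_identity:
  fixes N G T M' a :: nat
  assumes GN: "G \<le> N" and TG: "T \<le> G" and MN: "Suc M' \<le> N"
  defines "F \<equiv> ff (real (N - Suc M')) (G - a)"
  shows "real (N - G) / real N * (real (T choose a) * ff (real M') a * F / ff (real (N - 1)) G)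
     + real T / real N * (if a = 0 then 0 else real ((T - 1) choose (a - 1)) * ff (real M') (a - 1) * F / ff (real (N - 1)) (G - 1))
     = real (T choose a) * ff (real (Suc M')) a * F / ff (real N) G"
proof (cases "T choose a = 0")
  case True
  then have aT: "a > T" by simp
  have tc: "real (T choose a) = 0" using aT by simp
  have z2: "(T - 1) choose (a - 1) = 0 \<or> T = 0" using aT by (cases T) auto
  show ?thesis using z2 by (auto simp only: tc mult_zero_left mult_zero_right of_nat_0 div_0 add_0 if_cancel)
next
  case False
  then have aT: "a \<le> T" by simp
  show ?thesis
  proof (cases "G = 0")
    case True
    then have "T = 0" "a = 0" using TG aT by auto
    then show ?thesis using True MN by simp
  next
    case G0: False
    define D where "D = ff (real (N - 1)) (G - 1)"
    have Dpos: "D > 0" unfolding D_def by (rule ff_nat_pos) (use GN in linarith)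
    have N0: "N > 0" using MN by simp
    have ffNG: "ff (real N) G = real N * D"
      unfolding D_def using G0 N0 by (cases G) (auto simp: ff_Suc1 of_nat_diff)
    have ffN1G: "ff (real (N - 1)) G = D * real (N - G)"
      unfolding D_def using G0 N0 GN by (cases G) (auto simp: ff_Suc2 of_nat_diff)
    have ffM: "ff (real (Suc M')) a = ff (real M') a + real a * ff (real M') (a - 1)" if a0: "a > 0"
    proof -
      obtain b where b: "a = Suc b" using a0 by (cases a) auto
      have 1: "ff (real (Suc M')) (Suc b) = real (Suc M') * ff (real M') b" by (simp add: ff_Suc1)
      have 2: "ff (real M') (Suc b) = ff (real M') b * (real M' - real b)" by (rule ff_Suc2)
      show ?thesis unfolding b 1 2 by (simp add: algebra_simps)
    qed
    have Tch: "real T * real ((T - 1) choose (a - 1)) = real a * real (T choose a)" if a0: "a > 0"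
    proof -
      obtain b where b: "a = Suc b" using a0 by (cases a) auto
      have "T > 0" using aT b by simp
      then obtain T' where T': "T = Suc T'" by (cases T) auto
      have "real (Suc T' * (T' choose b)) = real (Suc b * (Suc T' choose Suc b))"
        by (metis Suc_times_binomial_eq mult.commute)
      then show ?thesis unfolding b T' by (simp only: of_nat_mult diff_Suc_1)
    qed
    show ?thesis
    proof (cases "N - G = 0")
      case L0: True
      have z: "ff (real M') a * F = 0"
      proof (cases "F = 0")
        case False
        then have "\<not> (N - Suc M' < G - a)" unfolding F_def using ff_nat_zero_iff by blast
        then have "a > M'" using L0 GN aT TG MN by linarith
        then show ?thesis by (simp add: ff_nat_zero)
      qed simp
      show ?thesis
      proof (cases "a = 0")
        case True
        then show ?thesis using z L0 by simp
      next
        case False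
        then have a0: "a > 0" by simp
        have "real T / real N * (real ((T - 1) choose (a - 1)) * ff (real M') (a - 1) * F / D)
           = real (T choose a) * (real a * ff (real M') (a - 1)) * F / (real N * D)"
          using Tch[OF a0] by (simp add: field_simps)
        also have "\<dots> = real (T choose a) * ff (real (Suc M')) a * F / (real N * D)"
        proof -
          have e: "ff (real (Suc M')) a * F = real a * ff (real M') (a - 1) * F"
            unfolding ffM[OF a0] distrib_right z by simp
          show ?thesis by (metis e mult.assoc)
        qed
        finally have calc: "real T / real N * (real ((T - 1) choose (a - 1)) * ff (real M') (a - 1) * F / D) =
          real (T choose a) * ff (real (Suc M')) a * F / (real N * D)" .
        show ?thesis unfolding ffNG D_def[symmetric] using L0 False calc by simp
      qed
    next
      case L1: False
      have first: "real (N - G) / real N * (real (T choose a) * ff (real M') a * F / ff (real (N - 1)) G)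
        = real (T choose a) * ff (real M') a * F / (real N * D)"
        unfolding ffN1G using L1 by (intro aux1) simp
      show ?thesis
      proof (cases "a = 0")
        case True
        then show ?thesis using first by (simp add: ffNG)
      next
        case False
        then have a0: "a > 0" by simp
        have "real (T choose a) * ff (real M') a * F / (real N * D) + real T / real N * (real ((T - 1) choose (a - 1)) * ff (real M') (a - 1) * F / D)
           = real (T choose a) * ff (real (Suc M')) a * F / (real N * D)"
          by (rule aux2[OF _ ffM[OF a0]]) (use Tch[OF a0] in simp)
        then show ?thesis using first False by (simp only: D_def[symmetric] ffNG if_False)
      qed
    qed
  qed
qed

definition E :: "nat \<Rightarrow> nat \<Rightarrow> nat \<Rightarrow> nat \<Rightarrow> nat list \<Rightarrow> bool" where
  "E M a t n xs \<longleftrightarrow> count (mset (take M xs)) t = a \<and> (\<forall>x\<in>set (take M xs). x \<le> t)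
     \<and> find (\<lambda>x. t \<le> x) (drop M xs) = Some n"

lemma E_Cons: "E (Suc M) a t n (x#xs) = (if t < x then False else if x < t then E M a t n xs
   else (a \<noteq> 0 \<and> E M (a - 1) t n xs))"
  unfolding E_def by auto

definition Gs :: "nat \<Rightarrow> nat multiset \<Rightarrow> nat" where
  "Gs t A = size (filter_mset (\<lambda>x. t \<le> x) A)"

definition qf :: "nat \<Rightarrow> nat \<Rightarrow> nat multiset \<Rightarrow> nat \<Rightarrow> real" where
  "qf t n A a = (real (count A n) - (if n = t then real a else 0)) / (real (Gs t A) - real a)"

definition RHS :: "nat \<Rightarrow> nat \<Rightarrow> nat \<Rightarrow> nat multiset \<Rightarrow> nat \<Rightarrow> real" where
  "RHS t n M A a = real (count A t choose a) * ff (real M) a * ff (real (size A - M)) (Gs t A - a)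
      / ff (real (size A)) (Gs t A) * qf t n A a"

lemma Gs_le: "Gs t A \<le> size A" unfolding Gs_def by simp

lemma count_le_Gs: "count A t \<le> Gs t A"
  unfolding Gs_def using count_le_size[of "filter_mset (\<lambda>x. t \<le> x) A" t] by simp

lemma Gs_lt: "x < t \<Longrightarrow> Gs t (A - {#x#}) = Gs t A"
  unfolding Gs_def by (simp add: filter_diff_mset)

lemma Gs_eq: "t \<in># A \<Longrightarrow> Gs t (A - {#t#}) = Gs t A - 1"
  unfolding Gs_def by (simp add: filter_diff_mset size_Diff_submset)

lemma size_lt: "real (size (filter_mset (\<lambda>x. x < t) A)) = real (size A) - real (Gs t A)"
proof -
  have p: "A = filter_mset (\<lambda>x. x < t) A + filter_mset (\<lambda>x. \<not> x < t) A" by (rule multiset_partition)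
  have "filter_mset (\<lambda>x. \<not> x < t) A = filter_mset (\<lambda>x. t \<le> x) A" by (simp add: not_less)
  then have "size A = size (filter_mset (\<lambda>x. x < t) A) + Gs t A"
    unfolding Gs_def by (metis p size_union)
  then show ?thesis by simp
qed

lemma main_ind:
  fixes A :: "nat multiset" and t n M a :: nat
  assumes "t \<le> n" "M \<le> size A"
  shows "Pr A (E M a t n) = RHS t n M A a"
  using assms(2)
proof (induction M arbitrary: A a)
  case 0
  have e: "E 0 a t n = (\<lambda>xs. a = 0 \<and> find (\<lambda>x. t \<le> x) xs = Some n)"
    unfolding E_def by auto
  show ?case
  proof (cases "a = 0")
    case True
    have pos: "ff (real (size A)) (Gs t A) > 0" by (rule ff_nat_pos[OF Gs_le])
    show ?thesis unfolding e using True pos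
      by (simp add: Pr_find[OF assms(1)] RHS_def qf_def Gs_def)
  next
    case False
    have "ff 0 a = 0" using False ff_nat_zero[of 0 a] by simp
    then show ?thesis unfolding e using False by (simp add: Pr_const RHS_def)
  qed
next
  case (Suc M)
  define N where "N = size A"
  define G where "G = Gs t A"
  define T where "T = count A t"
  have ne: "A \<noteq> {#}" using Suc.prems by auto
  have MN: "Suc M \<le> N" using Suc.prems N_def by simp
  have GN: "G \<le> N" unfolding G_def N_def by (rule Gs_le)
  have TG: "T \<le> G" unfolding G_def T_def by (rule count_le_Gs)
  define F where "F = ff (real (N - Suc M)) (G - a)"
  define V1 where "V1 = real (T choose a) * ff (real M) a * F / ff (real (N - 1)) G"
  define V2 where "V2 = (if a = 0 then 0 else real ((T - 1) choose (a - 1)) * ff (real M) (a - 1) * F / ff (real (N - 1)) (G - 1))"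
  have inner: "Pr (A - {#x#}) (\<lambda>xs. E (Suc M) a t n (x#xs)) =
     (if t < x then 0 else if x < t then V1 * qf t n A a else V2 * qf t n A a)" if x: "x \<in># A" for x
  proof -
    have sz: "size (A - {#x#}) = N - 1" using x N_def by (simp add: size_Diff_submset)
    have Mle: "M \<le> size (A - {#x#})" using sz MN by simp
    show ?thesis
    proof (cases "t < x")
      case True then show ?thesis by (simp add: E_Cons Pr_const)
    next
      case nt: False
      show ?thesis
      proof (cases "x < t")
        case True
        have cnt: "count (A - {#x#}) t = T" "count (A - {#x#}) n = count A n"
          using True assms(1) T_def by auto
        have q: "qf t n (A - {#x#}) a = qf t n A a" unfolding qf_def Gs_lt[OF True] cnt by simp
        have "Pr (A - {#x#}) (\<lambda>xs. E (Suc M) a t n (x#xs)) = Pr (A - {#x#}) (E M a t n)"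
          using True by (simp add: E_Cons)
        also have "\<dots> = RHS t n M (A - {#x#}) a" by (rule Suc.IH[OF Mle])
        also have "\<dots> = V1 * qf t n A a"
          unfolding RHS_def V1_def F_def q Gs_lt[OF True] cnt sz G_def[symmetric]
          by (simp add: diff_diff_left)
        finally show ?thesis using True nt by simp
      next
        case False
        then have xt: "x = t" using nt by simp
        show ?thesis
        proof (cases "a = 0")
          case True
          then show ?thesis using xt by (simp add: E_Cons Pr_const V2_def)
        next
          case a0: False
          have tA: "t \<in># A" using x xt by simp
          have T1: "T \<ge> 1" using tA T_def by (simp add: Suc_le_eq)
          have G1: "G \<ge> 1" using T1 TG by simp
          have cnt: "count (A - {#t#}) t = T - 1" using T_def by simp
          have q: "qf t n (A - {#t#}) (a - 1) = qf t n A a"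
          proof -
            have "real (count (A - {#t#}) n) - (if n = t then real (a - 1) else 0)
                 = real (count A n) - (if n = t then real a else 0)"
              using a0 T1 T_def by (cases "n = t") (auto simp: of_nat_diff)
            moreover have "real (Gs t (A - {#t#})) - real (a - 1) = real (Gs t A) - real a"
              unfolding Gs_eq[OF tA] using G1 a0 G_def by (simp add: of_nat_diff)
            ultimately show ?thesis unfolding qf_def by simp
          qed
          have "Pr (A - {#x#}) (\<lambda>xs. E (Suc M) a t n (x#xs)) = Pr (A - {#t#}) (E M (a - 1) t n)"
            using xt a0 by (simp add: E_Cons)
          also have "\<dots> = RHS t n M (A - {#t#}) (a - 1)" by (rule Suc.IH) (use Mle xt in simp)
          also have "\<dots> = V2 * qf t n A a"
          proof -
            have "G - 1 - (a - 1) = G - a" using a0 by simp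
            then show ?thesis
              unfolding RHS_def V2_def F_def q Gs_eq[OF tA] cnt sz[unfolded xt] G_def[symmetric]
              using a0 by (simp add: diff_diff_left)
          qed
          finally show ?thesis using xt by simp
        qed
      qed
    qed
  qed
  have "Pr A (E (Suc M) a t n) = (\<Sum>x\<in>set_mset A. real (count A x) / real N *
      (if t < x then 0 else if x < t then V1 * qf t n A a else V2 * qf t n A a))"
  proof (subst Pr_rec[OF ne], rule sum.cong[OF refl])
    fix x assume x: "x \<in> set_mset A"
    show "real (count A x) / real (size A) * Pr (A - {#x#}) (\<lambda>xs. E (Suc M) a t n (x#xs)) =
      real (count A x) / real N * (if t < x then 0 else if x < t then V1 * qf t n A a else V2 * qf t n A a)"
      by (simp only: inner[OF x] N_def)
  qed
  also have "\<dots> = (V1 * qf t n A a / real N) * (\<Sum>x\<in>set_mset A. if x < t then real (count A x) else 0)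
      + (V2 * qf t n A a / real N) * (\<Sum>x\<in>set_mset A. if x = t then real (count A x) else 0)"
    unfolding sum_distrib_left sum.distrib[symmetric]
    by (rule sum.cong[OF refl]) auto
  also have "(\<Sum>x\<in>set_mset A. if x < t then real (count A x) else 0) = real (N - G)"
    using size_lt[of t A] size_filter_sum[of "\<lambda>x. x < t" A] GN
    by (simp add: N_def G_def of_nat_diff)
  also have "(\<Sum>x\<in>set_mset A. if x = t then real (count A x) else 0) = real T"
    unfolding T_def by (cases "t \<in># A") (auto simp: sum.delta' not_in_iff)
  also have "V1 * qf t n A a / real N * real (N - G) + V2 * qf t n A a / real N * real T
     = (real (N - G) / real N * V1 + real T / real N * V2) * qf t n A a"
    by (simp add: algebra_simps)
  also have "real (N - G) / real N * V1 + real T / real N * V2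
      = real (T choose a) * ff (real (Suc M)) a * F / ff (real N) G"
    unfolding V1_def V2_def F_def by (rule step_identity[OF GN TG MN])
  also have "\<dots> * qf t n A a = RHS t n (Suc M) A a"
    unfolding RHS_def F_def N_def G_def T_def by simp
  finally show ?case .
qed

definition Am :: "nat \<Rightarrow> nat \<Rightarrow> nat multiset" where
  "Am n k = (\<Sum>r\<in>{1..n}. replicate_mset k r)"

lemma count_Am: "count (Am n k) x = (if x \<in> {1..n} then k else 0)"
  unfolding Am_def count_sum by (simp add: sum.delta' del: One_nat_def)

lemma size_Am: "size (Am n k) = k * n"
  unfolding Am_def by simp

lemma count_map_upt: "count (mset (map s [0..<N])) x = card {i. i < N \<and> s i = x}"
  unfolding count_mset count_list_eq_length_filter length_filter_conv_card
  by (rule arg_cong[where f=card]) auto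

lemma arr_to_list:
  assumes "s \<in> arrangements n k"
  shows "map s [0..<k*n] \<in> permutations_of_multiset (Am n k)"
proof (rule permutations_of_multisetI, rule multiset_eqI)
  fix x
  show "count (mset (map s [0..<k*n])) x = count (Am n k) x"
  proof (cases "x \<in> {1..n}")
    case True
    then show ?thesis using assms unfolding count_map_upt count_Am arrangements_def by auto
  next
    case False
    have "{i. i < k*n \<and> s i = x} = {}" using assms False unfolding arrangements_def by auto
    then have c0: "card {i. i < k*n \<and> s i = x} = 0" by (metis card.empty)
    show ?thesis unfolding count_map_upt count_Am c0 using False by auto
  qed
qed

lemma list_to_arr:
  assumes "xs \<in> permutations_of_multiset (Am n k)"
  shows "(\<lambda>i. if i < k*n then xs!i else 0) \<in> arrangements n k"
    and "map (\<lambda>i. if i < k*n then xs!i else 0) [0..<k*n] = xs"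
proof -
  have m: "mset xs = Am n k" using assms by (rule permutations_of_multisetD)
  have len: "length xs = k * n" using arg_cong[OF m, of size] by (simp add: size_Am)
  show "map (\<lambda>i. if i < k*n then xs!i else 0) [0..<k*n] = xs"
    by (rule nth_equalityI) (simp_all add: len)
  let ?s = "\<lambda>i. if i < k*n then xs!i else 0"
  have vals: "xs ! i \<in> {1..n}" if "i < k*n" for i
  proof -
    have "xs ! i \<in> set xs" using that len by simp
    then have "xs ! i \<in># Am n k" using m by (metis set_mset_mset)
    then show ?thesis by (metis count_Am count_eq_zero_iff)
  qed
  have cnt: "card {i. i < k*n \<and> ?s i = r} = k" if "r \<in> {1..n}" for r
  proof -
    have "card {i. i < k*n \<and> ?s i = r} = count (mset (map ?s [0..<k*n])) r"
      by (rule count_map_upt[symmetric])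
    also have "map ?s [0..<k*n] = xs" by (rule nth_equalityI) (simp_all add: len)
    finally show ?thesis using m that by (simp add: count_Am)
  qed
  show "?s \<in> arrangements n k"
    unfolding arrangements_def using vals cnt by auto
qed

lemma bij_arr: "bij_betw (\<lambda>s. map s [0..<k*n]) (arrangements n k) (permutations_of_multiset (Am n k))"
proof (rule bij_betw_byWitness[where f' = "\<lambda>xs i. if i < k*n then xs!i else 0"])
  show "\<forall>s\<in>arrangements n k. (\<lambda>i. if i < k*n then map s [0..<k*n] ! i else 0) = s"
    unfolding arrangements_def by auto
  show "\<forall>xs\<in>permutations_of_multiset (Am n k). map (\<lambda>i. if i < k*n then xs!i else 0) [0..<k*n] = xs"
    using list_to_arr(2) by blast
  show "(\<lambda>s. map s [0..<k*n]) ` arrangements n k \<subseteq> permutations_of_multiset (Am n k)"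
    using arr_to_list by blast
  show "(\<lambda>xs i. if i < k*n then xs!i else 0) ` permutations_of_multiset (Am n k) \<subseteq> arrangements n k"
    using list_to_arr(1) by blast
qed

definition winL :: "nat \<Rightarrow> nat \<Rightarrow> nat list \<Rightarrow> bool" where
  "winL M n xs \<longleftrightarrow> find (\<lambda>x. Max (set (take M xs)) \<le> x) (drop M xs) = Some n"

lemma find_map_upt:
  "find P (map s [M..<N]) = Some v \<longleftrightarrow>
    (\<exists>j. M \<le> j \<and> j < N \<and> P (s j) \<and> s j = v \<and> (\<forall>i. M \<le> i \<and> i < j \<longrightarrow> \<not> P (s i)))"
  unfolding find_Some_iff
proof safe
  fix i assume i: "i < length (map s [M..<N])" "P (map s [M..<N] ! i)"
    "\<forall>j<i. \<not> P (map s [M..<N] ! j)"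
  show "\<exists>j. M \<le> j \<and> j < N \<and> P (s j) \<and> s j = map s [M..<N] ! i \<and> (\<forall>i. M \<le> i \<and> i < j \<longrightarrow> \<not> P (s i))"
  proof (intro exI[of _ "M + i"] conjI allI impI)
    fix l assume l: "M \<le> l \<and> l < M + i"
    then have "\<not> P (map s [M..<N] ! (l - M))" using i(3) by auto
    then show "\<not> P (s l)" using l i(1) by auto
  qed (use i in auto)
next
  fix j assume j: "M \<le> j" "j < N" "P (s j)" "\<forall>i. M \<le> i \<and> i < j \<longrightarrow> \<not> P (s i)"
  show "\<exists>i<length (map s [M..<N]). P (map s [M..<N] ! i) \<and> s j = map s [M..<N] ! i \<and> (\<forall>ja<i. \<not> P (map s [M..<N] ! ja))"
    by (rule exI[of _ "j - M"]) (use j in auto)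
qed

lemma wins_iff:
  assumes "s \<in> arrangements n k" "M \<le> k * n"
  shows "strategy_wins n k M s \<longleftrightarrow> winL M n (map s [0..<k*n])"
proof -
  have tk: "take M (map s [0..<k*n]) = map s [0..<M]" using assms(2) by (simp add: take_map)
  have dr: "drop M (map s [0..<k*n]) = map s [M..<k*n]" by (simp add: drop_map)
  have st: "s ` {..<M} = set (map s [0..<M])" by (simp add: atLeast0LessThan)
  show ?thesis
    unfolding strategy_wins_def winL_def tk dr Let_def find_map_upt st
    by (auto simp: not_le)
qed

lemma win_prob_Pr:
  assumes "M \<le> k * n"
  shows "win_prob n k M = Pr (Am n k) (winL M n)"
proof -
  let ?f = "\<lambda>s. map s [0..<k*n]"
  have b: "bij_betw ?f (arrangements n k) (permutations_of_multiset (Am n k))" by (rule bij_arr)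
  have c1: "card (arrangements n k) = card (permutations_of_multiset (Am n k))"
    by (rule bij_betw_same_card[OF b])
  have "bij_betw ?f {s \<in> arrangements n k. strategy_wins n k M s}
      {xs \<in> permutations_of_multiset (Am n k). winL M n xs}"
  proof -
    have i: "inj_on ?f {s \<in> arrangements n k. strategy_wins n k M s}"
      using bij_betw_imp_inj_on[OF b] by (rule inj_on_subset) auto
    have "?f ` {s \<in> arrangements n k. strategy_wins n k M s} =
        {xs \<in> ?f ` arrangements n k. winL M n xs}"
      using wins_iff[OF _ assms] by auto
    also have "\<dots> = {xs \<in> permutations_of_multiset (Am n k). winL M n xs}"
      using bij_betw_imp_surj_on[OF b] by simp
    finally show ?thesis using i by (simp add: bij_betw_def)
  qed
  then have c2: "card {s \<in> arrangements n k. strategy_wins n k M s} =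
      card {xs \<in> permutations_of_multiset (Am n k). winL M n xs}"
    by (rule bij_betw_same_card)
  show ?thesis unfolding win_prob_def Pr_def c1 c2 ..
qed

lemma Pr_disj_sum:
  assumes "finite I"
    and disj: "\<And>xs i j. xs \<in> permutations_of_multiset A \<Longrightarrow> i \<in> I \<Longrightarrow> j \<in> I \<Longrightarrow> i \<noteq> j \<Longrightarrow> \<not> (Q i xs \<and> Q j xs)"
    and iff: "\<And>xs. xs \<in> permutations_of_multiset A \<Longrightarrow> P xs \<longleftrightarrow> (\<exists>i\<in>I. Q i xs)"
  shows "Pr A P = (\<Sum>i\<in>I. Pr A (Q i))"
proof -
  have eq: "{xs \<in> permutations_of_multiset A. P xs} = (\<Union>i\<in>I. {xs \<in> permutations_of_multiset A. Q i xs})"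
    using iff by auto
  have "card {xs \<in> permutations_of_multiset A. P xs} = (\<Sum>i\<in>I. card {xs \<in> permutations_of_multiset A. Q i xs})"
    unfolding eq by (rule card_UN_disjoint) (use assms(1) disj in auto)
  then show ?thesis unfolding Pr_def by (simp add: sum_divide_distrib)
qed

lemma set_mset_Am: "k \<ge> 1 \<Longrightarrow> set_mset (Am n k) = {1..n}"
  using count_Am[of n k] by (auto simp: set_mset_def)

lemma winL_iff:
  assumes xs: "xs \<in> permutations_of_multiset (Am n k)" and M: "1 \<le> M" "M \<le> k * n" and k: "k \<ge> 1"
  shows "winL M n xs \<longleftrightarrow> (\<exists>p\<in>{1..n}\<times>{1..k}. E M (snd p) (fst p) n xs)"
proof
  have m: "mset xs = Am n k" using xs by (rule permutations_of_multisetD)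
  have len: "length xs = k * n" using arg_cong[OF m, of size] by (simp add: size_Am)
  have ne: "set (take M xs) \<noteq> {}" using M len by (cases xs) auto
  define t where "t = Max (set (take M xs))"
  have tin: "t \<in> set (take M xs)" unfolding t_def using ne by (intro Max_in) auto
  have "t \<in> set xs" using tin by (meson in_set_takeD)
  then have t1n: "t \<in> {1..n}" using m set_mset_Am[OF k] by (metis set_mset_mset)
  define a where "a = count (mset (take M xs)) t"
  have a1: "a \<ge> 1" using tin unfolding a_def by (simp add: Suc_le_eq)
  have "a \<le> count (mset xs) t" unfolding a_def
    by (metis append_take_drop_id count_union le_add1 mset_append)
  then have ak: "a \<le> k" using m t1n by (simp add: count_Am)
  have le: "\<forall>x\<in>set (take M xs). x \<le> t" unfolding t_def using ne by simp
  assume "winL M n xs"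
  then have "E M a t n xs" unfolding E_def winL_def using le a_def t_def by simp
  then show "\<exists>p\<in>{1..n}\<times>{1..k}. E M (snd p) (fst p) n xs" using t1n a1 ak by force
next
  assume "\<exists>p\<in>{1..n}\<times>{1..k}. E M (snd p) (fst p) n xs"
  then obtain t a where ta: "t \<in> {1..n}" "a \<in> {1..k}" "E M a t n xs" by auto
  have tin: "t \<in> set (take M xs)" using ta unfolding E_def by (metis atLeastAtMost_iff count_eq_zero_iff not_one_le_zero set_mset_mset)
  have "Max (set (take M xs)) = t" using ta(3) tin unfolding E_def by (intro Max_eqI) auto
  then show "winL M n xs" using ta(3) unfolding E_def winL_def by simp
qed

lemma E_disj:
  assumes "(t, a) \<in> {1..n}\<times>{1..k}" "(t', a') \<in> {1..n}\<times>{1..k}" "E M a t n xs" "E M a' t' n xs"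
  shows "(t, a) = (t', a')"
proof -
  have tin: "t \<in> set (take M xs)" "t' \<in> set (take M xs)" using assms unfolding E_def
    by (metis SigmaE atLeastAtMost_iff count_eq_zero_iff not_one_le_zero prod.inject set_mset_mset)+
  have "t \<le> t'" "t' \<le> t" using assms(3,4) tin unfolding E_def by auto
  then show ?thesis using assms(3,4) unfolding E_def by auto
qed

lemma Gs_Am:
  assumes "t \<in> {1..n}" "k \<ge> 1"
  shows "Gs t (Am n k) = k * (n + 1 - t)"
proof -
  have "real (Gs t (Am n k)) = (\<Sum>x\<in>{1..n}. if t \<le> x then real k else 0)"
    unfolding Gs_def size_filter_sum set_mset_Am[OF assms(2)] by (rule sum.cong) (auto simp: count_Am)
  also have "\<dots> = (\<Sum>x\<in>{x\<in>{1..n}. t \<le> x}. real k)" by (rule sum.inter_filter[symmetric]) simp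
  also have "{x\<in>{1..n}. t \<le> x} = {t..n}" using assms by auto
  finally have "real (Gs t (Am n k)) = real (k * (n + 1 - t))" by simp
  then show ?thesis by (simp only: of_nat_eq_iff)
qed

definition tm :: "nat \<Rightarrow> nat \<Rightarrow> nat \<Rightarrow> nat \<Rightarrow> nat \<Rightarrow> real" where
  "tm k n M j a = real (k choose a) * ff (real M) a * ff (real (k*n - M)) (k*(j+1) - a)
     / ff (real (k*n)) (k*(j+1)) * ((real k - (if j = 0 then real a else 0)) / (real (k*(j+1)) - real a))"

theorem exact_formula:
  assumes "1 \<le> M" "M \<le> k * n" "k \<ge> 1"
  shows "win_prob n k M = (\<Sum>j<n. \<Sum>a\<in>{1..k}. tm k n M j a)"
proof -
  have "win_prob n k M = Pr (Am n k) (winL M n)" by (rule win_prob_Pr[OF assms(2)])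
  also have "\<dots> = (\<Sum>p\<in>{1..n}\<times>{1..k}. Pr (Am n k) (E M (snd p) (fst p) n))"
    by (rule Pr_disj_sum) (use winL_iff[OF _ assms(1,2,3)] E_disj in auto)
  also have "\<dots> = (\<Sum>t\<in>{1..n}. \<Sum>a\<in>{1..k}. Pr (Am n k) (E M a t n))"
    unfolding sum.cartesian_product by (rule sum.cong) auto
  also have "\<dots> = (\<Sum>t\<in>{1..n}. \<Sum>a\<in>{1..k}. tm k n M (n - t) a)"
  proof (intro sum.cong refl)
    fix t a assume t: "t \<in> {1..n}" and a: "a \<in> {1..k}"
    have "Pr (Am n k) (E M a t n) = RHS t n M (Am n k) a"
      by (rule main_ind) (use t assms in \<open>auto simp: size_Am\<close>)
    also have "\<dots> = tm k n M (n - t) a"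
    proof -
      have "n + 1 - t = n - t + 1" using t by auto
      then have g: "Gs t (Am n k) = k * (n - t + 1)" using Gs_Am[OF t assms(3)] by simp
      have c1: "count (Am n k) t = k" using t by (simp add: count_Am)
      have c2: "count (Am n k) n = k" using t by (simp add: count_Am)
      have "(n = t) = (n - t = 0)" using t by auto
      then show ?thesis unfolding RHS_def tm_def qf_def g c1 c2 size_Am by simp
    qed
    finally show "Pr (Am n k) (E M a t n) = tm k n M (n - t) a" .
  qed
  also have "\<dots> = (\<Sum>j<n. \<Sum>a\<in>{1..k}. tm k n M j a)"
    by (rule sum.reindex_bij_witness[of _ "\<lambda>j. n - j" "\<lambda>t. n - t"]) auto
  finally show ?thesis .
qed

lemma ff_add: "ff x (p + q) = ff x p * ff (x - real p) q"
  by (induction q) (simp_all add: ff_Suc2 algebra_simps)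

lemma ff_gchoose: "ff x p = fact p * (x gchoose p)"
  unfolding ff_def gbinomial_prod_rev atLeast0LessThan by simp

lemma ff_vandermonde:
  "(\<Sum>a\<in>{0..k}. real (k choose a) * ff x a * ff y (k - a)) = ff (x + y) k"
proof -
  have "(\<Sum>a\<in>{0..k}. real (k choose a) * ff x a * ff y (k - a))
     = (\<Sum>a\<in>{0..k}. fact k * ((x gchoose a) * (y gchoose (k - a))))"
  proof (rule sum.cong[OF refl])
    fix a assume "a \<in> {0..k}"
    then have "fact a * fact (k - a) * real (k choose a) = fact k"
      using binomial_fact_lemma[of a k] by (metis atLeastAtMost_iff of_nat_fact of_nat_mult)
    then show "real (k choose a) * ff x a * ff y (k - a) = fact k * ((x gchoose a) * (y gchoose (k - a)))"
      unfolding ff_gchoose by (metis (no_types, lifting) mult.assoc mult.commute)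
  qed
  also have "\<dots> = fact k * ((x + y) gchoose k)"
    by (simp add: sum_distrib_left[symmetric] gbinomial_Vandermonde)
  finally show ?thesis by (simp add: ff_gchoose)
qed

lemma ff_ratio_le:
  assumes "Y \<le> X" "p \<le> X"
  shows "ff (real Y) p / ff (real X) p \<le> (real Y / real X) ^ p"
  using assms(2)
proof (induction p)
  case 0 then show ?case by simp
next
  case (Suc p)
  have pos: "ff (real X) p > 0" using Suc.prems by (intro ff_nat_pos) simp
  show ?case
  proof (cases "Y < Suc p")
    case True
    then have "ff (real Y) (Suc p) = 0" by (rule ff_nat_zero)
    then show ?thesis by simp
  next
    case False
    have Xp: "real X - real p > 0" using Suc.prems by simp
    have fac: "(real Y - real p) / (real X - real p) \<le> real Y / real X"
      using assms(1) Xp False by (simp add: divide_simps) (simp add: algebra_simps mult_right_mono)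
    have nn: "(real Y - real p) / (real X - real p) \<ge> 0" using False Xp by simp
    have "ff (real Y) (Suc p) / ff (real X) (Suc p) =
        (ff (real Y) p / ff (real X) p) * ((real Y - real p) / (real X - real p))"
      by (simp add: ff_Suc2)
    also have "\<dots> \<le> (real Y / real X) ^ p * (real Y / real X)"
      by (rule mult_mono[OF Suc.IH fac]) (use Suc.prems pos nn in \<open>auto intro: divide_nonneg_nonneg ff_nat_nonneg\<close>)
    finally show ?thesis by (simp add: mult.commute)
  qed
qed

definition qq :: "nat \<Rightarrow> nat \<Rightarrow> nat \<Rightarrow> real" where
  "qq k j a = (real k - (if j = 0 then real a else 0)) / (real (k*(j+1)) - real a)"

definition hh :: "nat \<Rightarrow> nat \<Rightarrow> nat \<Rightarrow> nat \<Rightarrow> nat \<Rightarrow> real" where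
  "hh k n M j a = real (k choose a) * ff (real M) a * ff (real (k*n - M)) (k*(j+1) - a) / ff (real (k*n)) (k*(j+1))"

lemma tm_hh: "tm k n M j a = hh k n M j a * qq k j a"
  unfolding tm_def hh_def qq_def ..

lemma qq_bounds:
  assumes "a \<le> k"
  shows "0 \<le> qq k j a" "qq k j a \<le> 1"
proof -
  have num: "real k - (if j = 0 then real a else 0) \<ge> 0" using assms by auto
  have den: "real (k*(j+1)) - real a \<ge> real k - (if j = 0 then real a else 0)"
  proof (cases "j = 0")
    case False
    then have "k \<le> k * j" by simp
    then have "a \<le> k * j" using assms by linarith
    then have "real a \<le> real k * real j" by (metis of_nat_le_iff of_nat_mult)
    then show ?thesis using False by (simp add: algebra_simps)
  qed simp
  show "0 \<le> qq k j a" unfolding qq_def using num den by simp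
  show "qq k j a \<le> 1" unfolding qq_def
  proof (cases "real (k*(j+1)) - real a = 0")
    case False
    then have "real (k*(j+1)) - real a > 0" using num den by linarith
    then show "(real k - (if j = 0 then real a else 0)) / (real (k*(j+1)) - real a) \<le> 1"
      using den by (simp only: divide_le_eq_1) simp
  qed simp
qed

lemma hh_nonneg: "hh k n M j a \<ge> 0"
  unfolding hh_def by (intro divide_nonneg_nonneg mult_nonneg_nonneg ff_nat_nonneg) auto

lemma sum_hh:
  assumes "M \<le> k * n" "j < n"
  shows "(\<Sum>a\<in>{0..k}. hh k n M j a) = ff (real (k*n - M)) (k*j) / ff (real (k*n)) (k*j)"
proof -
  define N where "N = k * n"
  have kjN: "k * j + k \<le> N" unfolding N_def using assms(2)
    by (metis Suc_leI add.commute mult_Suc_right mult_le_mono2)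
  have D: "ff (real N) (k*(j+1)) = ff (real N) (k*j) * ff (real (N - k*j)) k"
    using ff_add[of "real N" "k*j" k] kjN by (simp add: algebra_simps of_nat_diff)
  have Dpos: "ff (real (N - k*j)) k > 0" using kjN by (intro ff_nat_pos) simp
  have D1pos: "ff (real N) (k*j) > 0" using kjN by (intro ff_nat_pos) simp
  have "(\<Sum>a\<in>{0..k}. hh k n M j a) = (\<Sum>a\<in>{0..k}.
      (ff (real (N - M)) (k*j) / ff (real N) (k*j)) *
      (real (k choose a) * ff (real M) a * ff (real (N - M) - real (k*j)) (k - a) / ff (real (N - k*j)) k))"
  proof (rule sum.cong[OF refl])
    fix a assume a: "a \<in> {0..k}"
    have "k * (j + 1) - a = k * j + (k - a)" using a by (simp add: algebra_simps)
    then have "ff (real (N - M)) (k * (j + 1) - a) = ff (real (N - M)) (k*j) * ff (real (N - M) - real (k*j)) (k - a)"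
      by (simp add: ff_add)
    then show "hh k n M j a = (ff (real (N - M)) (k*j) / ff (real N) (k*j)) *
      (real (k choose a) * ff (real M) a * ff (real (N - M) - real (k*j)) (k - a) / ff (real (N - k*j)) k)"
      unfolding hh_def N_def[symmetric] D by (simp add: field_simps)
  qed
  also have "\<dots> = (ff (real (N - M)) (k*j) / ff (real N) (k*j)) *
      ((\<Sum>a\<in>{0..k}. real (k choose a) * ff (real M) a * ff (real (N - M) - real (k*j)) (k - a)) / ff (real (N - k*j)) k)"
    by (simp add: sum_distrib_left sum_divide_distrib)
  also have "(\<Sum>a\<in>{0..k}. real (k choose a) * ff (real M) a * ff (real (N - M) - real (k*j)) (k - a))
      = ff (real (N - k*j)) k"
  proof -
    have kjN': "k * j \<le> N" using kjN by linarith
    have MN: "M \<le> N" using assms(1) N_def by simp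
    have e: "real M + (real (N - M) - real (k*j)) = real (N - k*j)"
      using kjN' MN by (simp add: of_nat_diff)
    show ?thesis unfolding ff_vandermonde e ..
  qed
  finally show ?thesis using Dpos by (simp add: N_def)
qed

lemma term_bound:
  assumes "M \<le> k * n" "j < n"
  shows "0 \<le> (\<Sum>a\<in>{1..k}. tm k n M j a)"
    "(\<Sum>a\<in>{1..k}. tm k n M j a) \<le> (real (k*n - M) / real (k*n)) ^ (k*j)"
proof -
  have t: "0 \<le> tm k n M j a \<and> tm k n M j a \<le> hh k n M j a" if "a \<in> {1..k}" for a
    unfolding tm_hh using qq_bounds[of a k j] that hh_nonneg[of k n M j a]
    by (auto intro: mult_nonneg_nonneg mult_left_le)
  show "0 \<le> (\<Sum>a\<in>{1..k}. tm k n M j a)" using t by (intro sum_nonneg) auto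
  have "(\<Sum>a\<in>{1..k}. tm k n M j a) \<le> (\<Sum>a\<in>{1..k}. hh k n M j a)"
    using t by (intro sum_mono) auto
  also have "\<dots> \<le> (\<Sum>a\<in>{0..k}. hh k n M j a)"
    by (rule sum_mono2) (auto simp: hh_nonneg)
  also have "\<dots> = ff (real (k*n - M)) (k*j) / ff (real (k*n)) (k*j)" by (rule sum_hh[OF assms])
  also have "\<dots> \<le> (real (k*n - M) / real (k*n)) ^ (k*j)"
    using assms by (intro ff_ratio_le) auto
  finally show "(\<Sum>a\<in>{1..k}. tm k n M j a) \<le> (real (k*n - M) / real (k*n)) ^ (k*j)" .
qed

lemma ff_lim:
  fixes x N :: "nat \<Rightarrow> real"
  assumes "(\<lambda>n. x n / N n) \<longlonglongrightarrow> L" "filterlim N at_top sequentially"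
  shows "(\<lambda>n. ff (x n) p / N n ^ p) \<longlonglongrightarrow> L ^ p"
proof -
  have ev: "eventually (\<lambda>n. N n > 0) sequentially"
    using assms(2) by (simp add: filterlim_at_top_dense)
  have "(\<lambda>n. \<Prod>i<p. x n / N n - real i / N n) \<longlonglongrightarrow> (\<Prod>i<p. L - 0)"
  proof (intro tendsto_prod tendsto_diff assms(1))
    fix i show "(\<lambda>n. real i / N n) \<longlonglongrightarrow> 0"
      by (rule tendsto_divide_0[OF tendsto_const filterlim_at_top_imp_at_infinity[OF assms(2)]])
  qed
  moreover have "eventually (\<lambda>n. (\<Prod>i<p. x n / N n - real i / N n) = ff (x n) p / N n ^ p) sequentially"
    using ev
  proof eventually_elim
    case (elim n)
    have "(\<Prod>i<p. x n / N n - real i / N n) = (\<Prod>i<p. (x n - real i) / N n)"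
      using elim by (intro prod.cong refl) (simp add: diff_divide_distrib)
    also have "\<dots> = ff (x n) p / N n ^ p" unfolding ff_def prod_dividef by simp
    finally show ?case .
  qed
  ultimately show ?thesis by (simp add: Lim_transform_eventually)
qed

definition bb :: "nat \<Rightarrow> real \<Rightarrow> nat \<Rightarrow> real" where
  "bb k c j = (\<Sum>a\<in>{1..k}. real (k choose a) * c ^ a * (1 - c) ^ (k*(j+1) - a) * qq k j a)"

lemma tm_lim:
  fixes M :: "nat \<Rightarrow> nat"
  assumes k: "k \<ge> 1" and a: "a \<le> k" and Mle: "\<forall>n\<ge>1. M n \<le> k*n"
    and lim: "(\<lambda>n. real (M n) / real (k*n)) \<longlonglongrightarrow> c"
  shows "(\<lambda>n. tm k n (M n) j a) \<longlonglongrightarrow> real (k choose a) * c ^ a * (1 - c) ^ (k*(j+1) - a) * qq k j a"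
proof -
  define m where "m = k * (j + 1)"
  have am: "a \<le> m" using a unfolding m_def by (simp add: trans_le_add1)
  have Ninf: "filterlim (\<lambda>n. real (k*n)) at_top sequentially"
    using filterlim_tendsto_pos_mult_at_top[OF tendsto_const[of "real k"] _ filterlim_real_sequentially] k by simp
  have Ninf': "filterlim (\<lambda>n. real k * real n) at_top sequentially"
    using Ninf by simp
  have l1: "(\<lambda>n. ff (real (M n)) a / real (k*n) ^ a) \<longlonglongrightarrow> c ^ a"
    by (rule ff_lim[OF lim Ninf])
  have lim2: "(\<lambda>n. real (k*n - M n) / real (k*n)) \<longlonglongrightarrow> 1 - c"
  proof -
    have "(\<lambda>n. 1 - real (M n) / real (k*n)) \<longlonglongrightarrow> 1 - c" by (intro tendsto_intros lim)
    moreover have "eventually (\<lambda>n. 1 - real (M n) / real (k*n) = real (k*n - M n) / real (k*n)) sequentially"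
      using eventually_ge_at_top[of 1]
    proof eventually_elim
      case (elim n)
      then have "M n \<le> k * n" "k > 0" "n > 0" using Mle k by auto
      then show ?case by (simp add: of_nat_diff diff_divide_distrib)
    qed
    ultimately show ?thesis by (rule Lim_transform_eventually)
  qed
  have l2: "(\<lambda>n. ff (real (k*n - M n)) (m - a) / real (k*n) ^ (m - a)) \<longlonglongrightarrow> (1 - c) ^ (m - a)"
    by (rule ff_lim[OF lim2 Ninf])
  have lim3: "(\<lambda>n. real (k*n) / real (k*n)) \<longlonglongrightarrow> 1"
  proof -
    have "eventually (\<lambda>n. 1 = real (k*n) / real (k*n)) sequentially"
      using eventually_ge_at_top[of 1] by eventually_elim (use k in simp)
    then show ?thesis by (rule Lim_transform_eventually[OF tendsto_const])
  qed
  have l3: "(\<lambda>n. ff (real (k*n)) m / real (k*n) ^ m) \<longlonglongrightarrow> 1 ^ m"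
    by (rule ff_lim[OF lim3 Ninf])
  have "(\<lambda>n. real (k choose a) * (ff (real (M n)) a / real (k*n) ^ a)
        * (ff (real (k*n - M n)) (m - a) / real (k*n) ^ (m - a)) / (ff (real (k*n)) m / real (k*n) ^ m) * qq k j a)
     \<longlonglongrightarrow> real (k choose a) * c ^ a * (1 - c) ^ (m - a) / 1 ^ m * qq k j a"
    by (intro tendsto_intros l1 l2 l3) simp
  moreover have "eventually (\<lambda>n. real (k choose a) * (ff (real (M n)) a / real (k*n) ^ a)
        * (ff (real (k*n - M n)) (m - a) / real (k*n) ^ (m - a)) / (ff (real (k*n)) m / real (k*n) ^ m) * qq k j a
      = tm k n (M n) j a) sequentially"
    using eventually_ge_at_top[of 1]
  proof eventually_elim
    case (elim n)
    have N0: "real (k*n) \<noteq> 0" using elim k by simp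
    have pw: "real (k*n) ^ m = real (k*n) ^ a * real (k*n) ^ (m - a)"
      using am by (simp add: power_add[symmetric])
    show ?case unfolding tm_hh hh_def m_def[symmetric] pw using N0 by (simp add: field_simps)
  qed
  ultimately show ?thesis unfolding m_def by (simp add: Lim_transform_eventually)
qed

lemma general_limit:
  fixes M :: "nat \<Rightarrow> nat" and c :: real
  assumes k: "k \<ge> 1" and c: "0 < c" "c < 1"
    and M: "\<forall>n\<ge>1. 1 \<le> M n \<and> M n \<le> k*n - 1"
    and lim: "(\<lambda>n. real (M n) / real (k*n)) \<longlonglongrightarrow> c"
  shows "(\<lambda>n. win_prob n k (M n)) \<longlonglongrightarrow> (\<Sum>j. bb k c j)"
proof -
  define a where "a j n = (if j < n then (\<Sum>a\<in>{1..k}. tm k n (M n) j a) else 0)" for j n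
  have Mle: "\<forall>n\<ge>1. M n \<le> k*n" using M by auto
  have lim_j: "(\<lambda>n. a j n) \<longlonglongrightarrow> bb k c j" for j
  proof -
    have "(\<lambda>n. \<Sum>a\<in>{1..k}. tm k n (M n) j a) \<longlonglongrightarrow> bb k c j"
      unfolding bb_def by (intro tendsto_sum tm_lim[OF k _ Mle lim]) auto
    moreover have "eventually (\<lambda>n. (\<Sum>a\<in>{1..k}. tm k n (M n) j a) = a j n) sequentially"
      using eventually_gt_at_top[of j] by eventually_elim (simp add: a_def)
    ultimately show ?thesis by (rule Lim_transform_eventually)
  qed
  define r where "r = 1 - c / 2"
  have r: "0 \<le> r" "r < 1" using c unfolding r_def by auto
  have "eventually (\<lambda>n. real (M n) / real (k*n) > c / 2) sequentially"
    using lim c by (intro order_tendstoD(1)) auto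
  then obtain n0 where n0: "\<And>n. n \<ge> n0 \<Longrightarrow> real (M n) / real (k*n) > c / 2"
    by (auto simp: eventually_sequentially)
  have bound: "\<bar>a j n\<bar> \<le> r ^ j" if n: "n \<ge> max n0 1" for j n
  proof (cases "j < n")
    case False then show ?thesis using r by (simp add: a_def)
  next
    case True
    have Mn: "M n \<le> k * n" using Mle n by auto
    have kn: "k > 0" "n > 0" using k n by auto
    have rat: "real (k*n - M n) / real (k*n) = 1 - real (M n) / real (k*n)"
      using Mn kn by (simp add: of_nat_diff diff_divide_distrib)
    have rat1: "real (k*n - M n) / real (k*n) \<le> r"
      unfolding rat r_def using n0[of n] n by simp
    have rat0: "0 \<le> real (k*n - M n) / real (k*n)" by simp
    have "\<bar>a j n\<bar> = (\<Sum>a\<in>{1..k}. tm k n (M n) j a)"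
      using term_bound(1)[OF Mn True] True by (simp add: a_def)
    also have "\<dots> \<le> (real (k*n - M n) / real (k*n)) ^ (k*j)"
      by (rule term_bound(2)[OF Mn True])
    also have "\<dots> \<le> r ^ (k*j)" by (rule power_mono[OF rat1 rat0])
    also have "\<dots> \<le> r ^ j" using k r by (intro power_decreasing) auto
    finally show ?thesis .
  qed
  have tann: "((\<lambda>n. \<Sum>j. a j n) \<longlongrightarrow> (\<Sum>j. bb k c j)) sequentially"
  proof (rule tannerys_theorem[THEN conjunct2, THEN conjunct2])
    show "\<And>j. (\<lambda>n. a j n) \<longlonglongrightarrow> bb k c j" by (rule lim_j)
    show "eventually (\<lambda>(j, n). norm (a j n) \<le> r ^ j) (at_top \<times>\<^sub>F sequentially)"
      unfolding eventually_prod_sequentially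
    proof (intro exI[of _ "max n0 1"] allI impI)
      fix m n :: nat assume "m \<ge> max n0 1"
      then show "case (n, m) of (j, n) \<Rightarrow> norm (a j n) \<le> r ^ j" using bound[of m n] by simp
    qed
    show "summable (\<lambda>j. r ^ j)" using r by (intro summable_geometric) auto
  qed simp
  moreover have "eventually (\<lambda>n. (\<Sum>j. a j n) = win_prob n k (M n)) sequentially"
    using eventually_ge_at_top[of 1]
  proof eventually_elim
    case (elim n)
    have "(\<lambda>j. a j n) sums (\<Sum>j\<in>{..<n}. a j n)"
      by (rule sums_finite) (simp_all add: a_def)
    then have "(\<Sum>j. a j n) = (\<Sum>j<n. a j n)" by (rule sums_unique[symmetric])
    also have "\<dots> = (\<Sum>j<n. \<Sum>a\<in>{1..k}. tm k n (M n) j a)"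
      by (rule sum.cong) (simp_all add: a_def)
    also have "\<dots> = win_prob n k (M n)"
    proof -
      have "1 \<le> M n \<and> M n \<le> k*n - 1" using M elim by simp
      then have "1 \<le> M n" "M n \<le> k*n" by auto
      then show ?thesis using exact_formula[of "M n" k n] k by simp
    qed
    finally show ?case .
  qed
  ultimately show ?thesis by (rule Lim_transform_eventually)
qed

lemma reindex_facts:
  fixes k r :: nat
  assumes k: "k \<ge> 1" and r: "1 \<le> r" "r \<le> k"
  shows "strict_mono (\<lambda>j. k * j + (r - 1))" "\<And>j. (k * j + (r - 1)) mod k = r - 1"
     "\<And>n. n \<notin> range (\<lambda>j. k * j + (r - 1)) \<Longrightarrow> n mod k \<noteq> r - 1"
proof -
  define g where "g = (\<lambda>j. k * j + (r - 1))"
  show "strict_mono (\<lambda>j. k * j + (r - 1))" unfolding strict_mono_def using k by simp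
  show "(k * j + (r - 1)) mod k = r - 1" for j
  proof -
    have "(k * j + (r - 1)) mod k = (r - 1) mod k" by (metis add.commute mod_mult_self2)
    then show ?thesis using r by simp
  qed
  show "n mod k \<noteq> r - 1" if "n \<notin> range (\<lambda>j. k * j + (r - 1))" for n
  proof
    assume "n mod k = r - 1"
    then have "n = g (n div k)" unfolding g_def by (metis div_mult_mod_eq mult.commute)
    then show False using that unfolding g_def by auto
  qed
qed

lemma series_closed:
  fixes k r :: nat and F :: "real \<Rightarrow> real" and u :: real
  assumes k: "k \<ge> 1" and r: "1 \<le> r" "r \<le> k" and F0: "F 0 = 0"
    and dF: "\<And>t. -1 < t \<Longrightarrow> t < 1 \<Longrightarrow> (F has_real_derivative t ^ (r - 1) / (1 - t ^ k)) (at t)"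
    and u: "-1 < u" "u < 1"
  shows "(\<lambda>j. u ^ (k*j + r) / real (k*j + r)) sums F u"
proof -
  define g where "g = (\<lambda>j. k * j + (r - 1))"
  have rf1: "strict_mono g" unfolding g_def by (rule reindex_facts(1)[OF k r])
  have rf2: "g j mod k = r - 1" for j unfolding g_def by (rule reindex_facts(2)[OF k r])
  have rf3: "n mod k \<noteq> r - 1" if "n \<notin> range g" for n
    using reindex_facts(3)[OF k r] that unfolding g_def by blast
  define f where "f n = (if n mod k = r - 1 then 1 / real (Suc n) else 0)" for n
  define P where "P x = (\<Sum>n. f n * x ^ Suc n)" for x :: real
  have gS: "Suc (g j) = k * j + r" for j unfolding g_def using r by simp
  have sumP: "(\<lambda>j. x ^ (k*j + r) / real (k*j + r)) sums P x" if x: "\<bar>x\<bar> < 1" for x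
  proof -
    have summ: "summable (\<lambda>n. f n * x ^ Suc n)"
    proof (rule summable_comparison_test[of _ "\<lambda>n. \<bar>x\<bar> ^ Suc n"])
      have "norm (f n * x ^ Suc n) \<le> \<bar>x\<bar> ^ Suc n" for n
      proof -
        have "\<bar>f n\<bar> \<le> 1" unfolding f_def by auto
        then have "\<bar>f n\<bar> * \<bar>x\<bar> ^ Suc n \<le> 1 * \<bar>x\<bar> ^ Suc n"
          by (intro mult_right_mono) auto
        then show ?thesis by (simp add: abs_mult power_abs)
      qed
      then show "\<exists>N. \<forall>n\<ge>N. norm (f n * x ^ Suc n) \<le> \<bar>x\<bar> ^ Suc n" by blast
      show "summable (\<lambda>n. \<bar>x\<bar> ^ Suc n)" using x by (simp add: summable_geometric)
    qed
    have "(\<lambda>n. f n * x ^ Suc n) sums P x" unfolding P_def using summ by (rule summable_sums)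
    then have "(\<lambda>j. f (g j) * x ^ Suc (g j)) sums P x"
      by (subst sums_mono_reindex[OF rf1]) (auto simp: f_def dest: rf3)
    moreover have "f (g j) * x ^ Suc (g j) = x ^ (k*j + r) / real (k*j + r)" for j
      unfolding f_def using rf2[of j] gS[of j] by simp
    ultimately show ?thesis by simp
  qed
  have dP: "DERIV P x :> x ^ (r - 1) / (1 - x ^ k)" if x: "-1 < x" "x < 1" for x
  proof -
    have coef: "f n * real (Suc n) = (if n mod k = r - 1 then 1 else 0)" for n
      unfolding f_def by simp
    have conv: "summable (\<lambda>n. f n * real (Suc n) * y ^ n)" if y: "y \<in> {-1<..<1}" for y
    proof (rule summable_comparison_test[of _ "\<lambda>n. \<bar>y\<bar> ^ n"])
      show "\<exists>N. \<forall>n\<ge>N. norm (f n * real (Suc n) * y ^ n) \<le> \<bar>y\<bar> ^ n"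
        unfolding coef by (auto simp: abs_mult power_abs)
      show "summable (\<lambda>n. \<bar>y\<bar> ^ n)" using y by (simp add: summable_geometric abs_less_iff)
    qed
    have D: "DERIV (\<lambda>x. \<Sum>n. f n * x ^ Suc n) x :> (\<Sum>n. f n * real (Suc n) * x ^ n)"
      by (rule DERIV_power_series'[OF conv]) (use x in auto)
    have "(\<lambda>n. (if n mod k = r - 1 then 1 else 0) * x ^ n) sums (x ^ (r - 1) / (1 - x ^ k))"
    proof -
      have xk: "norm (x ^ k) < 1" using x k by (simp add: abs_less_iff[symmetric] power_abs power_less_one_iff)
      have "(\<lambda>j. x ^ (r - 1) * (x ^ k) ^ j) sums (x ^ (r - 1) * (1 / (1 - x ^ k)))"
        by (intro sums_mult geometric_sums[simplified] xk)
      moreover have "x ^ (r - 1) * (x ^ k) ^ j = (if g j mod k = r - 1 then 1 else 0) * x ^ (g j)" for j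
        unfolding g_def using rf2[of j] by (simp add: power_add power_mult g_def)
      ultimately have "(\<lambda>j. (if g j mod k = r - 1 then 1 else 0) * x ^ (g j)) sums (x ^ (r - 1) / (1 - x ^ k))"
        by simp
      then show ?thesis
        by (subst (asm) sums_mono_reindex[OF rf1, of "\<lambda>n. (if n mod k = r - 1 then 1 else 0) * x ^ n"])
           (auto dest: rf3)
    qed
    then have "(\<Sum>n. f n * real (Suc n) * x ^ n) = x ^ (r - 1) / (1 - x ^ k)"
      unfolding coef by (rule sums_unique[symmetric])
    then show ?thesis using D unfolding P_def by simp
  qed
  have D0: "DERIV (\<lambda>x. P x - F x) x :> 0" if "x \<in> {-1<..<1}" for x
    using DERIV_diff[OF dP[of x] dF[of x]] that by simp
  have "(\<lambda>x. P x - F x) u = (\<lambda>x. P x - F x) 0"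
    by (rule DERIV_isconst3[OF _ _ _ D0]) (use u in auto)
  then have "P u - F u = P 0 - F 0" by simp
  moreover have "P 0 = 0" unfolding P_def by simp
  ultimately have "P u = F u" using F0 by simp
  then show ?thesis using sumP[of u] u by simp
qed

lemma sum12: "(\<Sum>a\<in>{1..2::nat}. f a) = f 1 + f 2"
  by (simp add: numeral_2_eq_2 atLeastAtMostSuc_conv add.commute)

lemma bb2_0: "bb 2 c 0 = 2 * c * (1 - c)"
  unfolding bb_def qq_def sum12 by simp

lemma bb2_Suc: "bb 2 c (Suc j) = 4 * c * ((1 - c) ^ (2 * Suc j + 1) / real (2 * Suc j + 1))
    + 2 * c ^ 2 * ((1 - c) ^ (2 * j + 2) / real (2 * j + 2))"
proof -
  have e1: "2 * (Suc j + 1) - 1 = 2 * Suc j + 1" "2 * (Suc j + 1) - 2 = 2 * j + 2" by simp_all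
  have e2: "real (2 * (Suc j + 1)) - 1 = real (2 * Suc j + 1)" "real (2 * (Suc j + 1)) - 2 = real (2 * j + 2)"
    by simp_all
  show ?thesis unfolding bb_def qq_def sum12 e1 e2 by (simp add: field_simps)
qed

lemma t2: "-1 < t \<Longrightarrow> t < (1::real) \<Longrightarrow> 1 - t * t > 0"
  using abs_square_less_1[of t] by (simp add: power2_eq_square abs_less_iff)

lemma F21_deriv: "-1 < t \<Longrightarrow> t < 1 \<Longrightarrow>
  ((\<lambda>t. (ln (1 + t) - ln (1 - t)) / 2) has_real_derivative t ^ (1 - 1) / (1 - t ^ 2)) (at t)"
  using t2[of t] by (auto intro!: derivative_eq_intros simp: field_simps power2_eq_square)

lemma F22_deriv: "-1 < t \<Longrightarrow> t < 1 \<Longrightarrow>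
  ((\<lambda>t. - ln (1 - t ^ 2) / 2) has_real_derivative t ^ (2 - 1) / (1 - t ^ 2)) (at t)"
  using t2[of t] by (auto intro!: derivative_eq_intros simp: field_simps power2_eq_square abs_less_iff)

lemma limit2_value:
  fixes c :: real
  assumes c: "0 < c" "c < 1"
  shows "(\<Sum>j. bb 2 c j) = -2*c*(1-c) + (2*c - c^2) * ln (2-c) - (2*c + c^2) * ln c"
proof -
  define u where "u = 1 - c"
  have u: "-1 < u" "u < 1" using c unfolding u_def by auto
  have s1: "(\<lambda>j. u ^ (2*j + 1) / real (2*j + 1)) sums ((ln (1 + u) - ln (1 - u)) / 2)"
    by (rule series_closed[where F="\<lambda>t. (ln (1 + t) - ln (1 - t)) / 2"]) (use F21_deriv u in auto)
  have s1': "(\<lambda>j. u ^ (2 * Suc j + 1) / real (2 * Suc j + 1)) sums ((ln (1 + u) - ln (1 - u)) / 2 - u)"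
    by (subst sums_Suc_iff) (use s1 in simp)
  have s2: "(\<lambda>j. u ^ (2*j + 2) / real (2*j + 2)) sums (- ln (1 - u ^ 2) / 2)"
    by (rule series_closed[where F="\<lambda>t. - ln (1 - t ^ 2) / 2"]) (use F22_deriv u in auto)
  have "(\<lambda>j. bb 2 c (Suc j)) sums (4 * c * ((ln (1 + u) - ln (1 - u)) / 2 - u) + 2 * c ^ 2 * (- ln (1 - u ^ 2) / 2))"
    unfolding bb2_Suc u_def[symmetric] by (intro sums_add sums_mult s1' s2)
  then have "bb 2 c sums (4 * c * ((ln (1 + u) - ln (1 - u)) / 2 - u) + 2 * c ^ 2 * (- ln (1 - u ^ 2) / 2) + bb 2 c 0)"
    by (subst (asm) sums_Suc_iff)
  then have calc: "(\<Sum>j. bb 2 c j) = 4 * c * ((ln (1 + u) - ln (1 - u)) / 2 - u) + 2 * c ^ 2 * (- ln (1 - u ^ 2) / 2) + bb 2 c 0"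
    by (rule sums_unique[symmetric])
  have e1: "1 + u = 2 - c" "1 - u = c" unfolding u_def by simp_all
  have e3: "1 - u ^ 2 = c * (2 - c)" unfolding u_def by (simp add: power2_eq_square algebra_simps)
  have e4: "ln (c * (2 - c)) = ln c + ln (2 - c)" using c by (simp add: ln_mult)
  show ?thesis unfolding calc e1 e3 e4 bb2_0 unfolding u_def by (simp add: field_simps power2_eq_square)
qed

lemma sum13: "(\<Sum>a\<in>{1..3::nat}. f a) = f 1 + f 2 + f 3"
proof -
  have "{1..3::nat} = {1,2,3}" by auto
  then show ?thesis by (simp add: add.assoc)
qed

lemma c3: "(3 choose 1) = 3" "(3 choose 2) = 3" "(3 choose 3) = 1"
  by (simp_all add: numeral_eq_Suc binomial_Suc_Suc)

lemma bb3_0: "bb 3 c 0 = 3 * c * (1 - c) ^ 2 + 3 * c ^ 2 * (1 - c)"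
  unfolding bb_def qq_def sum13 c3 by (simp add: power2_eq_square)

lemma bb3_Suc: "bb 3 c (Suc j) = 9 * c * ((1 - c) ^ (3 * Suc j + 2) / real (3 * Suc j + 2))
    + 9 * c ^ 2 * ((1 - c) ^ (3 * Suc j + 1) / real (3 * Suc j + 1))
    + 3 * c ^ 3 * ((1 - c) ^ (3 * j + 3) / real (3 * j + 3))"
proof -
  have e1: "3 * (Suc j + 1) - 1 = 3 * Suc j + 2" "3 * (Suc j + 1) - 2 = 3 * Suc j + 1"
    "3 * (Suc j + 1) - 3 = 3 * j + 3" by simp_all
  have e2: "real (3 * (Suc j + 1)) - 1 = real (3 * Suc j + 2)" "real (3 * (Suc j + 1)) - 2 = real (3 * Suc j + 1)"
    "real (3 * (Suc j + 1)) - 3 = real (3 * j + 3)"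
    by simp_all
  show ?thesis unfolding bb_def qq_def sum13 e1 e2 c3 by (simp add: field_simps)
qed

lemma Q_pos: "(t::real) ^ 2 + t + 1 > 0"
proof -
  have "(t ^ 2 + t + 1) = (t + 1/2) ^ 2 + 3/4" by (simp add: power2_eq_square algebra_simps)
  also have "\<dots> > 0" by (intro add_nonneg_pos) auto
  finally show ?thesis .
qed

lemma sq3: "sqrt 3 * sqrt 3 = (3::real)" by simp

lemma t32: "3 / (y::real) * (2 / 3) = 2 / y" by simp

lemma aux_s:
  fixes s x :: real
  assumes s: "s * s = 3"
  shows "s / 3 * (inverse (1 + (x / s)\<^sup>2) * (2 / s)) = 2 / (3 + x\<^sup>2)"
proof -
  have s0: "s \<noteq> 0" using s by auto
  have p: "3 + x\<^sup>2 > 0" by (simp add: add_pos_nonneg)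
  have "(x / s)\<^sup>2 = x\<^sup>2 / 3" using s by (simp add: power_divide power2_eq_square)
  then have I: "inverse (1 + (x / s)\<^sup>2) = 3 / (3 + x\<^sup>2)" using p by (simp add: field_simps)
  have S: "s / 3 * (2 / s) = 2 / 3" using s0 by simp
  have "s / 3 * (inverse (1 + (x / s)\<^sup>2) * (2 / s)) = inverse (1 + (x / s)\<^sup>2) * (s / 3 * (2 / s))"
    by (simp only: mult.left_commute)
  also have "\<dots> = 3 / (3 + x\<^sup>2) * (2 / 3)" unfolding I S ..
  also have "\<dots> = 2 / (3 + x\<^sup>2)" by (rule t32)
  finally show ?thesis .
qed

lemma frac3p:
  fixes x y a z :: real
  assumes "x \<noteq> 0" "y \<noteq> 0" "2 * y + x * a + 3 * x = 6 * z"
  shows "1 / (3 * x) + a / (6 * y) + 1 / (2 * y) = z / (x * y)"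
  using assms by (simp add: field_simps)

lemma frac3m:
  fixes x y a z :: real
  assumes "x \<noteq> 0" "y \<noteq> 0" "2 * y + x * a - 3 * x = 6 * z"
  shows "1 / (3 * x) + a / (6 * y) - 1 / (2 * y) = z / (x * y)"
  using assms by (simp add: field_simps)

lemma two4: "2 / (4 * (y::real)) = 1 / (2 * y)" by simp

lemma DA: "((\<lambda>t. sqrt 3 / 3 * arctan ((2 * t + 1) / sqrt 3)) has_real_derivative 1 / (2 * (t ^ 2 + t + 1))) (at t)"
proof -
  have "((\<lambda>t. sqrt 3 / 3 * arctan ((2 * t + 1) / sqrt 3)) has_real_derivative
      sqrt 3 / 3 * (inverse (1 + ((2 * t + 1) / sqrt 3)\<^sup>2) * ((2 * 1 + 0) / sqrt 3))) (at t)"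
    by (intro DERIV_cmult DERIV_chain2[OF DERIV_arctan] DERIV_cdivide DERIV_add DERIV_cmult DERIV_ident DERIV_const) 
  moreover have "sqrt 3 / 3 * (inverse (1 + ((2 * t + 1) / sqrt 3)\<^sup>2) * ((2 * 1 + 0) / sqrt 3)) = 1 / (2 * (t ^ 2 + t + 1))"
  proof -
    have z: "(2 * 1 + 0 :: real) = 2" by simp
    have "sqrt 3 / 3 * (inverse (1 + ((2 * t + 1) / sqrt 3)\<^sup>2) * ((2 * 1 + 0) / sqrt 3)) = 2 / (3 + (2 * t + 1)\<^sup>2)"
      unfolding z by (rule aux_s) simp
    also have "3 + (2 * t + 1)\<^sup>2 = 4 * (t ^ 2 + t + 1)" by (simp add: power2_eq_square algebra_simps)
    also have "2 / (4 * (t ^ 2 + t + 1)) = 1 / (2 * (t ^ 2 + t + 1))" by (rule two4)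
    finally show ?thesis .
  qed
  ultimately show ?thesis by (metis (no_types, lifting))
qed

lemma DL1: "t < 1 \<Longrightarrow> ((\<lambda>t. - ln (1 - t) / 3) has_real_derivative 1 / (3 * (1 - t))) (at t)"
  by (auto intro!: derivative_eq_intros simp: field_simps)

lemma DL2: "((\<lambda>t. ln (t ^ 2 + t + 1) / 6) has_real_derivative (2 * t + 1) / (6 * (t ^ 2 + t + 1))) (at t)"
  using Q_pos[of t] by (auto intro!: derivative_eq_intros simp: field_simps power2_eq_square)

lemma t3: "t < (1::real) \<Longrightarrow> 1 - t ^ 3 > 0"
proof -
  assume t: "t < 1"
  have "1 - t ^ 3 = (1 - t) * (t ^ 2 + t + 1)" by (simp add: power2_eq_square power3_eq_cube algebra_simps)
  also have "\<dots> > 0" using t Q_pos[of t] by simp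
  finally show ?thesis .
qed

lemma F31_deriv: "-1 < t \<Longrightarrow> t < 1 \<Longrightarrow>
  ((\<lambda>t. - ln (1 - t) / 3 + ln (t ^ 2 + t + 1) / 6 + sqrt 3 / 3 * arctan ((2 * t + 1) / sqrt 3) - sqrt 3 / 3 * (pi / 6))
     has_real_derivative t ^ (1 - 1) / (1 - t ^ 3)) (at t)"
proof -
  assume t: "-1 < t" "t < 1"
  have D: "((\<lambda>t. - ln (1 - t) / 3 + ln (t ^ 2 + t + 1) / 6 + sqrt 3 / 3 * arctan ((2 * t + 1) / sqrt 3) - sqrt 3 / 3 * (pi / 6))
     has_real_derivative 1 / (3 * (1 - t)) + (2 * t + 1) / (6 * (t ^ 2 + t + 1)) + 1 / (2 * (t ^ 2 + t + 1)) - 0) (at t)"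
    by (intro DERIV_diff DERIV_add DL1 DL2 DA DERIV_const t)
  have f: "1 - t ^ 3 = (1 - t) * (t ^ 2 + t + 1)" by (simp add: power2_eq_square power3_eq_cube algebra_simps)
  have nz: "1 - t \<noteq> 0" "t ^ 2 + t + 1 \<noteq> 0" using t Q_pos[of t] by auto
  have "1 / (3 * (1 - t)) + (2 * t + 1) / (6 * (t ^ 2 + t + 1)) + 1 / (2 * (t ^ 2 + t + 1)) - 0 = t ^ (1 - 1) / (1 - t ^ 3)"
  proof -
    have "2 * (t ^ 2 + t + 1) + (1 - t) * (2 * t + 1) + 3 * (1 - t) = 6 * 1"
      by (simp add: power2_eq_square algebra_simps)
    then have X: "1 / (3 * (1 - t)) + (2 * t + 1) / (6 * (t ^ 2 + t + 1)) + 1 / (2 * (t ^ 2 + t + 1)) = 1 / ((1 - t) * (t ^ 2 + t + 1))"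
      by (rule frac3p[OF nz])
    show ?thesis by (simp only: X f diff_zero diff_self_eq_0 power_0)
  qed
  then show ?thesis using D by simp
qed

lemma F32_deriv: "-1 < t \<Longrightarrow> t < 1 \<Longrightarrow>
  ((\<lambda>t. - ln (1 - t) / 3 + ln (t ^ 2 + t + 1) / 6 - sqrt 3 / 3 * arctan ((2 * t + 1) / sqrt 3) + sqrt 3 / 3 * (pi / 6))
     has_real_derivative t ^ (2 - 1) / (1 - t ^ 3)) (at t)"
proof -
  assume t: "-1 < t" "t < 1"
  have D: "((\<lambda>t. - ln (1 - t) / 3 + ln (t ^ 2 + t + 1) / 6 - sqrt 3 / 3 * arctan ((2 * t + 1) / sqrt 3) + sqrt 3 / 3 * (pi / 6))
     has_real_derivative 1 / (3 * (1 - t)) + (2 * t + 1) / (6 * (t ^ 2 + t + 1)) - 1 / (2 * (t ^ 2 + t + 1)) + 0) (at t)"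
    by (intro DERIV_diff DERIV_add DL1 DL2 DA DERIV_const t)
  have f: "1 - t ^ 3 = (1 - t) * (t ^ 2 + t + 1)" by (simp add: power2_eq_square power3_eq_cube algebra_simps)
  have nz: "1 - t \<noteq> 0" "t ^ 2 + t + 1 \<noteq> 0" using t Q_pos[of t] by auto
  have "1 / (3 * (1 - t)) + (2 * t + 1) / (6 * (t ^ 2 + t + 1)) - 1 / (2 * (t ^ 2 + t + 1)) + 0 = t ^ (2 - 1) / (1 - t ^ 3)"
  proof -
    have "2 * (t ^ 2 + t + 1) + (1 - t) * (2 * t + 1) - 3 * (1 - t) = 6 * t"
      by (simp add: power2_eq_square algebra_simps)
    then have X: "1 / (3 * (1 - t)) + (2 * t + 1) / (6 * (t ^ 2 + t + 1)) - 1 / (2 * (t ^ 2 + t + 1)) = t / ((1 - t) * (t ^ 2 + t + 1))"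
      by (rule frac3m[OF nz])
    have e: "(2::nat) - 1 = 1" by simp
    show ?thesis by (simp only: X f add_0_right e power_one_right)
  qed
  then show ?thesis using D by simp
qed

lemma F33_deriv: "-1 < t \<Longrightarrow> t < 1 \<Longrightarrow>
  ((\<lambda>t. - ln (1 - t ^ 3) / 3) has_real_derivative t ^ (3 - 1) / (1 - t ^ 3)) (at t)"
  using t3[of t] by (auto intro!: derivative_eq_intros simp: field_simps power2_eq_square power3_eq_cube)

lemma arctan_30: "arctan (1 / sqrt 3) = pi / 6"
  using arctan_tan[of "pi/6"] tan_30 by simp

lemma limit3_value:
  fixes c :: real
  assumes c: "0 < c" "c < 1"
  shows "(\<Sum>j. bb 3 c j) = -(3/2)*(1-c)*c*(1+3*c) - (3*c + 3*c^2 + c^3) * ln c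
                 + ((3/2)*c + (3/2)*c^2 - c^3) * ln (c^2 - 3*c + 3)
                 + 3*sqrt 3*(c^2 - c) * arctan ((3 - 2*c)/sqrt 3)
                 + sqrt 3 * pi / 2 * (c - c^2)"
proof -
  define u where "u = 1 - c"
  have u: "-1 < u" "u < 1" using c unfolding u_def by auto
  define A where "A = arctan ((2 * u + 1) / sqrt 3)"
  define L1 where "L1 = ln (1 - u)"
  define L2 where "L2 = ln (u ^ 2 + u + 1)"
  have a0: "arctan ((2 * 0 + 1) / sqrt 3) = pi / 6" using arctan_30 by simp
  have s1: "(\<lambda>j. u ^ (3*j + 1) / real (3*j + 1)) sums
      (- ln (1 - u) / 3 + ln (u ^ 2 + u + 1) / 6 + sqrt 3 / 3 * arctan ((2 * u + 1) / sqrt 3) - sqrt 3 / 3 * (pi / 6))"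
    by (rule series_closed[where F="\<lambda>t. - ln (1 - t) / 3 + ln (t ^ 2 + t + 1) / 6 + sqrt 3 / 3 * arctan ((2 * t + 1) / sqrt 3) - sqrt 3 / 3 * (pi / 6)"])
      (use F31_deriv u a0 in auto)
  have s1': "(\<lambda>j. u ^ (3 * Suc j + 1) / real (3 * Suc j + 1)) sums
      (- L1 / 3 + L2 / 6 + sqrt 3 / 3 * A - sqrt 3 / 3 * (pi / 6) - u)"
    unfolding L1_def L2_def A_def by (subst sums_Suc_iff) (use s1 in simp)
  have s2: "(\<lambda>j. u ^ (3*j + 2) / real (3*j + 2)) sums
      (- ln (1 - u) / 3 + ln (u ^ 2 + u + 1) / 6 - sqrt 3 / 3 * arctan ((2 * u + 1) / sqrt 3) + sqrt 3 / 3 * (pi / 6))"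
    by (rule series_closed[where F="\<lambda>t. - ln (1 - t) / 3 + ln (t ^ 2 + t + 1) / 6 - sqrt 3 / 3 * arctan ((2 * t + 1) / sqrt 3) + sqrt 3 / 3 * (pi / 6)"])
      (use F32_deriv u a0 in auto)
  have s2': "(\<lambda>j. u ^ (3 * Suc j + 2) / real (3 * Suc j + 2)) sums
      (- L1 / 3 + L2 / 6 - sqrt 3 / 3 * A + sqrt 3 / 3 * (pi / 6) - u ^ 2 / 2)"
    unfolding L1_def L2_def A_def by (subst sums_Suc_iff) (use s2 in \<open>simp add: power2_eq_square\<close>)
  have s3: "(\<lambda>j. u ^ (3*j + 3) / real (3*j + 3)) sums (- ln (1 - u ^ 3) / 3)"
    by (rule series_closed[where F="\<lambda>t. - ln (1 - t ^ 3) / 3"]) (use F33_deriv u in auto)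
  have "(\<lambda>j. bb 3 c (Suc j)) sums
      (9 * c * (- L1 / 3 + L2 / 6 - sqrt 3 / 3 * A + sqrt 3 / 3 * (pi / 6) - u ^ 2 / 2)
     + 9 * c ^ 2 * (- L1 / 3 + L2 / 6 + sqrt 3 / 3 * A - sqrt 3 / 3 * (pi / 6) - u)
     + 3 * c ^ 3 * (- ln (1 - u ^ 3) / 3))"
    unfolding bb3_Suc u_def[symmetric] by (intro sums_add sums_mult s1' s2' s3)
  then have "bb 3 c sums
      (9 * c * (- L1 / 3 + L2 / 6 - sqrt 3 / 3 * A + sqrt 3 / 3 * (pi / 6) - u ^ 2 / 2)
     + 9 * c ^ 2 * (- L1 / 3 + L2 / 6 + sqrt 3 / 3 * A - sqrt 3 / 3 * (pi / 6) - u)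
     + 3 * c ^ 3 * (- ln (1 - u ^ 3) / 3) + bb 3 c 0)"
    by (subst (asm) sums_Suc_iff)
  then have calc: "(\<Sum>j. bb 3 c j) =
      9 * c * (- L1 / 3 + L2 / 6 - sqrt 3 / 3 * A + sqrt 3 / 3 * (pi / 6) - u ^ 2 / 2)
     + 9 * c ^ 2 * (- L1 / 3 + L2 / 6 + sqrt 3 / 3 * A - sqrt 3 / 3 * (pi / 6) - u)
     + 3 * c ^ 3 * (- ln (1 - u ^ 3) / 3) + bb 3 c 0"
    by (rule sums_unique[symmetric])
  have Qp: "c ^ 2 - 3 * c + 3 > 0"
  proof -
    have "c ^ 2 - 3 * c + 3 = (c - 3/2) ^ 2 + 3/4" by (simp add: power2_eq_square algebra_simps)
    also have "\<dots> > 0" by (intro add_nonneg_pos) auto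
    finally show ?thesis .
  qed
  have e1: "L1 = ln c" unfolding L1_def u_def by simp
  have e2: "L2 = ln (c ^ 2 - 3 * c + 3)" unfolding L2_def u_def
    by (rule arg_cong[where f=ln]) (simp add: power2_eq_square algebra_simps)
  have e3: "A = arctan ((3 - 2 * c) / sqrt 3)" unfolding A_def u_def
    by (rule arg_cong[where f=arctan]) (simp add: algebra_simps)
  have e4: "ln (1 - u ^ 3) = ln c + ln (c ^ 2 - 3 * c + 3)"
  proof -
    have "1 - u ^ 3 = c * (c ^ 2 - 3 * c + 3)" unfolding u_def by (simp add: power2_eq_square power3_eq_cube algebra_simps)
    then show ?thesis using c Qp by (simp add: ln_mult)
  qed
  have s3: "sqrt 3 * sqrt 3 = (3::real)" by simp
  show ?thesis unfolding calc e1 e2 e3 e4 bb3_0 unfolding u_def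
    by (simp add: field_simps power2_eq_square power3_eq_cube)
qed


theorem mainTheorem3:
  fixes c :: real
  assumes "0 < c" "c < 1"
  shows "(\<forall>M :: nat \<Rightarrow> nat.
            (\<forall>n\<ge>1. 1 \<le> M n \<and> M n \<le> 2*n - 1)
          \<and> (\<lambda>n. real (M n) / real (2*n)) \<longlonglongrightarrow> c
          \<longrightarrow> (\<lambda>n. win_prob n 2 (M n)) \<longlonglongrightarrow>
                (-2*c*(1-c) + (2*c - c^2) * ln (2-c) - (2*c + c^2) * ln c))
       \<and> (\<forall>M :: nat \<Rightarrow> nat.
            (\<forall>n\<ge>1. 1 \<le> M n \<and> M n \<le> 3*n - 1)
          \<and> (\<lambda>n. real (M n) / real (3*n)) \<longlonglongrightarrow> c
          \<longrightarrow> (\<lambda>n. win_prob n 3 (M n)) \<longlonglongrightarrow>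
                (-(3/2)*(1-c)*c*(1+3*c) - (3*c + 3*c^2 + c^3) * ln c
                 + ((3/2)*c + (3/2)*c^2 - c^3) * ln (c^2 - 3*c + 3)
                 + 3*sqrt 3*(c^2 - c) * arctan ((3 - 2*c)/sqrt 3)
                 + sqrt 3 * pi / 2 * (c - c^2)))"
proof (intro conjI allI impI)
  fix M :: "nat \<Rightarrow> nat"
  assume h: "(\<forall>n\<ge>1. 1 \<le> M n \<and> M n \<le> 2*n - 1) \<and> (\<lambda>n. real (M n) / real (2*n)) \<longlonglongrightarrow> c"
  have "(\<lambda>n. win_prob n 2 (M n)) \<longlonglongrightarrow> (\<Sum>j. bb 2 c j)"
    by (rule general_limit) (use h assms in auto)
  then show "(\<lambda>n. win_prob n 2 (M n)) \<longlonglongrightarrow>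
                (-2*c*(1-c) + (2*c - c^2) * ln (2-c) - (2*c + c^2) * ln c)"
    using limit2_value[OF assms] by simp
next
  fix M :: "nat \<Rightarrow> nat"
  assume h: "(\<forall>n\<ge>1. 1 \<le> M n \<and> M n \<le> 3*n - 1) \<and> (\<lambda>n. real (M n) / real (3*n)) \<longlonglongrightarrow> c"
  have "(\<lambda>n. win_prob n 3 (M n)) \<longlonglongrightarrow> (\<Sum>j. bb 3 c j)"
    by (rule general_limit) (use h assms in auto)
  then show "(\<lambda>n. win_prob n 3 (M n)) \<longlonglongrightarrow>
                (-(3/2)*(1-c)*c*(1+3*c) - (3*c + 3*c^2 + c^3) * ln c
                 + ((3/2)*c + (3/2)*c^2 - c^3) * ln (c^2 - 3*c + 3)
                 + 3*sqrt 3*(c^2 - c) * arctan ((3 - 2*c)/sqrt 3)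
                 + sqrt 3 * pi / 2 * (c - c^2))"
    using limit3_value[OF assms] by simp
qed

end
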